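(* Let $N \geq 1$ be an integer and let $\pi : \{0,1,\dots,N-1\} \to \{0,1,\dots,N-1\}$ be any function. Then $\pi$ is a Hamiltonian cycle, i.e. $\pi$ is a permutation of $\{0,1,\dots,N-1\}$ consisting of a single cycle of length $N$, if and only if both of the following hold: (1) $\pi^j(0) \neq 0$ for every integer $j$ with $1 \leq j \leq N-1$ and $j \mid N$; and (2) $\pi^N(0) = 0$.
   Context: $\pi^j$ denotes the $j$-fold composition of $\pi$ with itself, and $j \mid N$ means $j$ divides $N$. In the paper, $\pi$ encodes a candidate traveling-salesman tour on $N$ cities: $\pi(i)$ is the city visited immediately after city $i$; the tour is a legal Hamiltonian cycle exactly when $\pi$ is a cyclic permutation of length $N$. *)

theory Defs
  imports Main
begin

definition hamiltonian_cycle :: "nat \<Rightarrow> (nat \<Rightarrow> nat) \<Rightarrow> bool" where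
  "hamiltonian_cycle N \<pi> \<longleftrightarrow>
     bij_betw \<pi> {..<N} {..<N} \<and>
     (\<forall>x\<in>{..<N}. \<forall>y\<in>{..<N}. \<exists>k. (\<pi> ^^ k) x = y)"

end

theory Submission
  imports Defs
begin

lemma fp_mult: fixes \<pi> :: "nat \<Rightarrow> nat" shows "(\<pi> ^^ p) (0::nat) = 0 \<Longrightarrow> (\<pi> ^^ (q*p)) 0 = 0"
  by (induction q) (simp_all add: funpow_add add.commute)

lemma fp_mod: fixes \<pi> :: "nat \<Rightarrow> nat" assumes "(\<pi> ^^ p) (0::nat) = 0" shows "(\<pi> ^^ k) 0 = (\<pi> ^^ (k mod p)) 0"
proof -
  have "k = k mod p + (k div p) * p" by simp
  then have "(\<pi> ^^ k) 0 = (\<pi> ^^ (k mod p)) ((\<pi> ^^ ((k div p) * p)) 0)"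
    by (metis comp_apply funpow_add)
  then show ?thesis using fp_mult[OF assms] by simp
qed

lemma fp_shift: "(\<pi> ^^ a) ((\<pi> ^^ b) x) = (\<pi> ^^ (a+b)) x"
  by (simp add: funpow_add)

lemma fp_dist:
  fixes \<pi> :: "nat \<Rightarrow> nat"
  assumes p: "\<And>j. 0 < j \<Longrightarrow> j < p \<Longrightarrow> (\<pi> ^^ j) (0::nat) \<noteq> 0" and pp: "(\<pi> ^^ p) 0 = 0"
    and ab: "a < b" "b < p"
  shows "(\<pi> ^^ a) 0 \<noteq> (\<pi> ^^ b) 0"
proof
  assume e: "(\<pi> ^^ a) 0 = (\<pi> ^^ b) 0"
  have "(\<pi> ^^ (p - b + a)) 0 = (\<pi> ^^ (p - b)) ((\<pi> ^^ a) 0)" by (simp add: fp_shift)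
  also have "\<dots> = (\<pi> ^^ (p - b)) ((\<pi> ^^ b) 0)" using e by simp
  also have "\<dots> = 0" using ab pp by (simp add: fp_shift)
  finally have z: "(\<pi> ^^ (p - b + a)) 0 = 0" .
  have c1: "0 < p - b + a" and c2: "p - b + a < p" using ab by auto
  show False using p[OF c1 c2] z by simp
qed

lemma fp_range: fixes \<pi> :: "nat \<Rightarrow> nat" assumes "N \<ge> 1" "\<forall>i\<in>{..<N}. \<pi> i \<in> {..<N}" shows "(\<pi> ^^ k) 0 \<in> {..<N}"
  using assms by (induction k) (auto simp del: lessThan_iff)

lemma orbit_card:
  fixes \<pi> :: "nat \<Rightarrow> nat"
  assumes p: "\<And>j. 0 < j \<Longrightarrow> j < p \<Longrightarrow> (\<pi> ^^ j) (0::nat) \<noteq> 0" and pp: "(\<pi> ^^ p) 0 = 0"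
  shows "card ((\<lambda>k. (\<pi> ^^ k) 0) ` {..<p}) = p"
proof -
  have "inj_on (\<lambda>k. (\<pi> ^^ k) 0) {..<p}"
  proof (rule inj_onI)
    fix a b assume "a \<in> {..<p}" "b \<in> {..<p}" "(\<pi> ^^ a) 0 = (\<pi> ^^ b) 0"
    then show "a = b" using fp_dist[OF p pp, of a b] fp_dist[OF p pp, of b a]
      by (metis lessThan_iff linorder_neqE_nat)
  qed
  then show ?thesis by (simp add: card_image)
qed

theorem theorem2:
  fixes N :: nat and \<pi> :: "nat \<Rightarrow> nat"
  assumes "N \<ge> 1"
    and "\<forall>i\<in>{..<N}. \<pi> i \<in> {..<N}"
  shows "hamiltonian_cycle N \<pi> \<longleftrightarrow>
           ((\<forall>j. 1 \<le> j \<and> j \<le> N - 1 \<and> j dvd N \<longrightarrow> (\<pi> ^^ j) 0 \<noteq> 0) \<and>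
            (\<pi> ^^ N) 0 = 0)"
proof
  assume H: "hamiltonian_cycle N \<pi>"
  have N0: "0 \<in> {..<N}" using assms(1) by simp
  have "\<pi> 0 \<in> {..<N}" using assms N0 by blast
  then obtain k where "(\<pi> ^^ k) (\<pi> 0) = 0" using H N0 unfolding hamiltonian_cycle_def by blast
  then have "(\<pi> ^^ Suc k) 0 = 0" by (simp only: funpow_Suc_right comp_apply)
  then have ex: "\<exists>p. 0 < p \<and> (\<pi> ^^ p) 0 = 0" by blast
  define p where "p = (LEAST p. 0 < p \<and> (\<pi> ^^ p) 0 = 0)"
  have pp: "0 < p" "(\<pi> ^^ p) 0 = 0" using LeastI_ex[OF ex] unfolding p_def by auto
  have pm: "\<And>j. 0 < j \<Longrightarrow> j < p \<Longrightarrow> (\<pi> ^^ j) 0 \<noteq> 0"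
  proof -
    fix j :: nat assume j: "0 < j" "j < p"
    show "(\<pi> ^^ j) 0 \<noteq> 0"
      using not_less_Least[of j "\<lambda>p. 0 < p \<and> (\<pi> ^^ p) 0 = 0"] j unfolding p_def by auto
  qed
  let ?O = "(\<lambda>k. (\<pi> ^^ k) 0) ` {..<p}"
  have "?O \<subseteq> {..<N}" using fp_range[OF assms] by blast
  then have "p \<le> N" using orbit_card[OF pm pp(2)] by (metis card_lessThan card_mono finite_lessThan)
  moreover have "{..<N} \<subseteq> ?O"
  proof
    fix y assume "y \<in> {..<N}"
    then obtain k where "(\<pi> ^^ k) 0 = y" using H N0 unfolding hamiltonian_cycle_def by blast
    then have "y = (\<pi> ^^ (k mod p)) 0" using fp_mod[OF pp(2), of k] by simp
    then show "y \<in> ?O" using pp(1) by auto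
  qed
  then have "N \<le> p" using orbit_card[OF pm pp(2)]
    by (metis card_lessThan card_mono finite_imageI finite_lessThan)
  ultimately have "p = N" by simp
  then show "(\<forall>j. 1 \<le> j \<and> j \<le> N - 1 \<and> j dvd N \<longrightarrow> (\<pi> ^^ j) 0 \<noteq> 0) \<and> (\<pi> ^^ N) 0 = 0"
    using pm pp assms(1) by auto
next
  assume R: "(\<forall>j. 1 \<le> j \<and> j \<le> N - 1 \<and> j dvd N \<longrightarrow> (\<pi> ^^ j) 0 \<noteq> 0) \<and> (\<pi> ^^ N) 0 = 0"
  have ex: "\<exists>p. 0 < p \<and> (\<pi> ^^ p) 0 = 0" using R assms(1) by (intro exI[of _ N]) simp
  define p where "p = (LEAST p. 0 < p \<and> (\<pi> ^^ p) 0 = 0)"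
  have pp: "0 < p" "(\<pi> ^^ p) 0 = 0" using LeastI_ex[OF ex] unfolding p_def by auto
  have pm: "\<And>j. 0 < j \<Longrightarrow> j < p \<Longrightarrow> (\<pi> ^^ j) 0 \<noteq> 0"
  proof -
    fix j :: nat assume j: "0 < j" "j < p"
    show "(\<pi> ^^ j) 0 \<noteq> 0"
      using not_less_Least[of j "\<lambda>p. 0 < p \<and> (\<pi> ^^ p) 0 = 0"] j unfolding p_def by auto
  qed
  have "p \<le> N"
  proof (rule ccontr)
    assume "\<not> p \<le> N" then show False using pm[of N] R assms(1) by simp
  qed
  have "(\<pi> ^^ (N mod p)) 0 = 0" using fp_mod[OF pp(2), of N] R by simp
  then have "N mod p = 0" using pm[of "N mod p"] pp(1) by (meson mod_less_divisor not_gr_zero)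
  then have "p dvd N" by auto
  have pN: "p = N"
  proof (rule ccontr)
    assume "p \<noteq> N"
    then have "1 \<le> p \<and> p \<le> N - 1 \<and> p dvd N" using \<open>p \<le> N\<close> pp(1) \<open>p dvd N\<close> by linarith
    then show False using R pp(2) by blast
  qed
  have pN2: "(\<pi> ^^ N) 0 = 0" using pp(2) pN by simp
  let ?f = "\<lambda>k. (\<pi> ^^ k) 0"
  let ?O = "?f ` {..<N}"
  have sub: "?O \<subseteq> {..<N}" using fp_range[OF assms] by blast
  have cO: "card ?O = N" using orbit_card[OF pm pp(2)] pN by simp
  have O: "?O = {..<N}" by (rule card_subset_eq[OF finite_lessThan sub]) (simp add: cO)
  have img: "\<pi> ` {..<N} = {..<N}"
  proof
    show "\<pi> ` {..<N} \<subseteq> {..<N}" using assms(2) by (simp add: image_subset_iff)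
    show "{..<N} \<subseteq> \<pi> ` {..<N}"
    proof
      fix y assume "y \<in> {..<N}"
      then have "y \<in> ?O" by (simp only: O)
      then obtain k where k: "k < N" "y = ?f k" by blast
      define m where "m = (N - 1 + k) mod N"
      have mN: "m < N" using assms(1) unfolding m_def by simp
      have "Suc m mod N = Suc (N - 1 + k) mod N" unfolding m_def by (simp add: mod_Suc_eq)
      also have "Suc (N - 1 + k) = N + k" using assms(1) by simp
      also have "(N + k) mod N = k" using k(1) by simp
      finally have sm: "Suc m mod N = k" .
      have "\<pi> (?f m) = ?f (Suc m)" by simp
      also have "\<dots> = ?f (Suc m mod N)" by (rule fp_mod[OF pN2])
      also have "\<dots> = y" using sm k by simp
      finally have "\<pi> (?f m) = y" .
      moreover have "?f m \<in> {..<N}" using fp_range[OF assms] .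
      ultimately show "y \<in> \<pi> ` {..<N}" by blast
    qed
  qed
  have bij: "bij_betw \<pi> {..<N} {..<N}"
    unfolding bij_betw_def using img eq_card_imp_inj_on[of "{..<N}" \<pi>] by simp
  have tr: "\<forall>x\<in>{..<N}. \<forall>y\<in>{..<N}. \<exists>k. (\<pi> ^^ k) x = y"
  proof (intro ballI)
    fix x y assume "x \<in> {..<N}" "y \<in> {..<N}"
    then have "x \<in> ?O" "y \<in> ?O" by (simp_all only: O)
    then obtain a b where ab: "a < N" "x = ?f a" "b < N" "y = ?f b" by blast
    have "(\<pi> ^^ (b + N - a)) x = ?f (b + N - a + a)" using ab by (simp add: fp_shift)
    also have "b + N - a + a = b + N" using ab by simp
    also have "?f (b + N) = ?f ((b + N) mod N)" by (rule fp_mod[OF pN2])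
    also have "(b + N) mod N = b" using ab by simp
    also have "?f b = y" using ab by simp
    finally show "\<exists>k. (\<pi> ^^ k) x = y" by blast
  qed
  show "hamiltonian_cycle N \<pi>" unfolding hamiltonian_cycle_def using bij tr by blast
qed

end
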